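(* Let $R\subseteq S$, $\sigma$ be as in the context. Let $a_1,\ldots,a_\ell\in S$ be such that $a_i-a_j^\beta\in S^*$ for all $\beta\in S^*$ and all $1\le i<j\le\ell$. For $i=1,\ldots,\ell$, let $\mathbf{u}_i=(u_{i,1},\ldots,u_{i,n_i})\in S^{n_i}$ and $t_i={\rm rk}(\mathbf{u}_i)$, and set $t=t_1+\cdots+t_\ell$. Then there exists a monic skew polynomial $F\in S[x;\sigma]$ with $\deg(F)=t$ and $F_{a_i}(u_{i,j})=0$ for all $1\le j\le n_i$ and $1\le i\le\ell$.
   Context: $R$ is a finite commutative chain ring with maximal ideal $\mathfrak{m}$, $q=|R/\mathfrak{m}|$; $S=R[x]/(h)$ with $h$ monic of degree $m$ irreducible modulo $\mathfrak{m}$, local with maximal ideal $\mathfrak{M}=\mathfrak{m}S$ and unit group $S^*=S\setminus\mathfrak{M}$. $\sigma$ is a ring automorphism of $S$ generating the Galois group of $R\subseteq S$, with fixed ring $R$, reducing modulo $\mathfrak{M}$ to $y\mapsto y^q$. $S[x;\sigma]$ is the skew polynomial ring with $xa=\sigma(a)x$. For $a,\beta\in S$: $N_i(a)=\sigma^{i-1}(a)\cdots\sigma(a)a$, $\mathcal{D}_a^i(\beta)=\sigma^i(\beta)N_i(a)$, and for $F=\sum_iF_ix^i$, $F_a(\beta)=\sum_iF_i\mathcal{D}_a^i(\beta)$. For $\beta\in S^*$, $a^\beta=\sigma(\beta)a\beta^{-1}$. Rank: for $\mathbf{u}\in S^s$, fix an $R$-basis $\alpha_1,\ldots,\alpha_m$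 of $S$ and write $\mathbf{u}=\sum_{i=1}^m\alpha_i(c_{i,1},\ldots,c_{i,s})$ with $c_{i,j}\in R$; ${\rm rk}(\mathbf{u})$ is the number of nonzero diagonal entries in the Smith normal form of the matrix $(c_{i,j})\in R^{m\times s}$ (independent of the basis). *)

theory Defs
  imports "HOL-Computational_Algebra.Polynomial"
begin

section \<open>Subrings, ideals, chain rings (inside an ambient commutative ring S = type 'a)\<close>

definition subring :: "'a::comm_ring_1 set \<Rightarrow> bool" where
  "subring R \<longleftrightarrow> 0 \<in> R \<and> 1 \<in> R \<and>
     (\<forall>x\<in>R. \<forall>y\<in>R. x + y \<in> R \<and> x - y \<in> R \<and> x * y \<in> R)"

definition ideal_of :: "'a::comm_ring_1 set \<Rightarrow> 'a set \<Rightarrow> bool" where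
  "ideal_of R I \<longleftrightarrow> I \<subseteq> R \<and> 0 \<in> I \<and> (\<forall>x\<in>I. \<forall>y\<in>I. x + y \<in> I)
     \<and> (\<forall>r\<in>R. \<forall>x\<in>I. r * x \<in> I)"

definition chain_ring :: "'a::comm_ring_1 set \<Rightarrow> bool" where
  "chain_ring R \<longleftrightarrow> subring R \<and>
     (\<forall>I J. ideal_of R I \<and> ideal_of R J \<longrightarrow> I \<subseteq> J \<or> J \<subseteq> I)"

definition max_ideal :: "'a::comm_ring_1 set \<Rightarrow> 'a set" where
  "max_ideal R = {r \<in> R. \<not> (\<exists>s\<in>R. r * s = 1)}"

definition residue_card :: "'a::comm_ring_1 set \<Rightarrow> nat" where
  "residue_card R = card R div card (max_ideal R)"

definition ext_ideal :: "'a::comm_ring_1 set \<Rightarrow> 'a set" where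
  "ext_ideal R = {y. \<exists>(k::nat) (c::nat \<Rightarrow> 'a) (s::nat \<Rightarrow> 'a).
      (\<forall>i<k. c i \<in> max_ideal R) \<and> y = (\<Sum>i<k. c i * s i)}"

definition irred_mod_max :: "'a::comm_ring_1 set \<Rightarrow> 'a poly \<Rightarrow> bool" where
  "irred_mod_max R h \<longleftrightarrow> degree h \<ge> 1 \<and>
     \<not> (\<exists>f g. (\<forall>i. coeff f i \<in> R) \<and> (\<forall>i. coeff g i \<in> R) \<and>
            degree f < degree h \<and> degree g < degree h \<and>
            (\<forall>i. coeff (h - f * g) i \<in> max_ideal R))"

definition ring_aut :: "('a::comm_ring_1 \<Rightarrow> 'a) \<Rightarrow> bool" where
  "ring_aut \<sigma> \<longleftrightarrow> bij \<sigma> \<and> (\<forall>x y. \<sigma> (x + y) = \<sigma> x + \<sigma> y \<and> \<sigma> (x * y) = \<sigma> x * \<sigma> y)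
     \<and> \<sigma> 1 = 1"

definition R_basis :: "'a::comm_ring_1 set \<Rightarrow> nat \<Rightarrow> (nat \<Rightarrow> 'a) \<Rightarrow> bool" where
  "R_basis R m \<alpha> \<longleftrightarrow> (\<forall>y. \<exists>!c. (\<forall>i<m. c i \<in> R) \<and> (\<forall>i\<ge>m. c i = 0) \<and>
                          y = (\<Sum>i<m. c i * \<alpha> i))"

text \<open>Skew polynomials in S[x;\<sigma>] are represented by their coefficient sequences
  (a value of type 'a poly; only coefficients, degree and leading coefficient are used).\<close>

definition normf :: "('a::comm_ring_1 \<Rightarrow> 'a) \<Rightarrow> nat \<Rightarrow> 'a \<Rightarrow> 'a" where
  "normf \<sigma> i a = (\<Prod>k<i. (\<sigma> ^^ k) a)"

definition Dop :: "('a::comm_ring_1 \<Rightarrow> 'a) \<Rightarrow> 'a \<Rightarrow> nat \<Rightarrow> 'a \<Rightarrow> 'a" where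
  "Dop \<sigma> a i \<beta> = (\<sigma> ^^ i) \<beta> * normf \<sigma> i a"

definition skew_eval :: "('a::comm_ring_1 \<Rightarrow> 'a) \<Rightarrow> 'a poly \<Rightarrow> 'a \<Rightarrow> 'a \<Rightarrow> 'a" where
  "skew_eval \<sigma> F a \<beta> = (\<Sum>i\<le>degree F. coeff F i * Dop \<sigma> a i \<beta>)"

definition mat_mult :: "(nat \<Rightarrow> nat \<Rightarrow> 'a::comm_ring_1) \<Rightarrow> nat \<Rightarrow> (nat \<Rightarrow> nat \<Rightarrow> 'a) \<Rightarrow> nat \<Rightarrow> nat \<Rightarrow> 'a" where
  "mat_mult A k B = (\<lambda>i j. \<Sum>l<k. A i l * B l j)"

definition invertible_over :: "'a::comm_ring_1 set \<Rightarrow> nat \<Rightarrow> (nat \<Rightarrow> nat \<Rightarrow> 'a) \<Rightarrow> bool" where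
  "invertible_over R n P \<longleftrightarrow> (\<forall>i<n. \<forall>j<n. P i j \<in> R) \<and>
     (\<exists>P'. (\<forall>i<n. \<forall>j<n. P' i j \<in> R) \<and>
        (\<forall>i<n. \<forall>j<n. mat_mult P n P' i j = (if i = j then 1 else 0) \<and>
                     mat_mult P' n P i j = (if i = j then 1 else 0)))"

definition smith_form_of :: "'a::comm_ring_1 set \<Rightarrow> nat \<Rightarrow> nat \<Rightarrow> (nat \<Rightarrow> nat \<Rightarrow> 'a) \<Rightarrow> (nat \<Rightarrow> nat \<Rightarrow> 'a) \<Rightarrow> bool" where
  "smith_form_of R m s C D \<longleftrightarrow>
     (\<exists>P Q. invertible_over R m P \<and> invertible_over R s Q \<and>
        (\<forall>i<m. \<forall>j<s. D i j = mat_mult (mat_mult P m C) s Q i j)) \<and>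
     (\<forall>i<m. \<forall>j<s. i \<noteq> j \<longrightarrow> D i j = 0) \<and>
     (\<forall>k. Suc k < min m s \<longrightarrow> (\<exists>r\<in>R. D (Suc k) (Suc k) = r * D k k))"

definition rk :: "'a::comm_ring_1 set \<Rightarrow> nat \<Rightarrow> nat \<Rightarrow> (nat \<Rightarrow> 'a) \<Rightarrow> nat" where
  "rk R m s u = (LEAST r. \<exists>\<alpha> C D. R_basis R m \<alpha> \<and>
       (\<forall>i<m. \<forall>j<s. C i j \<in> R) \<and> (\<forall>j<s. u j = (\<Sum>i<m. C i j * \<alpha> i)) \<and>
       smith_form_of R m s C D \<and> r = card {k. k < min m s \<and> D k k \<noteq> 0})"

end

theory Submission
  imports Defs
begin

lemma aut_add: "ring_aut s \<Longrightarrow> s (x + y) = s x + s y" by (simp add: ring_aut_def)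
lemma aut_mult: "ring_aut s \<Longrightarrow> s (x * y) = s x * s y" by (simp add: ring_aut_def)
lemma aut_one: "ring_aut s \<Longrightarrow> s 1 = 1" by (simp add: ring_aut_def)
lemma aut_zero: "ring_aut s \<Longrightarrow> s 0 = 0"
  using aut_add[of s 0 0] by simp
lemma aut_uminus: "ring_aut s \<Longrightarrow> s (- x) = - s x"
proof -
  assume a: "ring_aut s"
  have "s x + s (- x) = s x + (- s x)" using aut_add[OF a, of x "-x"] aut_zero[OF a] by simp
  then show ?thesis by (rule add_left_imp_eq)
qed
lemma aut_diff: "ring_aut s \<Longrightarrow> s (x - y) = s x - s y"
  using aut_add[of s x "-y"] aut_uminus[of s y] by simp
lemma aut_sum: "ring_aut s \<Longrightarrow> s (sum f I) = (\<Sum>i\<in>I. s (f i))"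
  by (induction I rule: infinite_finite_induct) (auto simp: aut_zero aut_add)
lemma aut_prod: "ring_aut s \<Longrightarrow> s (prod f I) = (\<Prod>i\<in>I. s (f i))"
  by (induction I rule: infinite_finite_induct) (auto simp: aut_one aut_mult)
lemma aut_power: "ring_aut s \<Longrightarrow> s (x ^ k) = s x ^ k"
  by (induction k) (auto simp: aut_one aut_mult)
lemma aut_funpow: "ring_aut s \<Longrightarrow> ring_aut (s ^^ k)"
proof (induction k)
  case 0 then show ?case by (simp add: ring_aut_def bij_def inj_on_def)
next
  case (Suc k)
  then show ?case unfolding ring_aut_def
    by (auto simp: bij_comp aut_add aut_mult aut_one intro: bij_comp)
qed

lemma normf_Suc: "ring_aut s \<Longrightarrow> normf s (Suc i) a = s (normf s i a) * a"
proof -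
  assume a: "ring_aut s"
  have "normf s (Suc i) a = a * (\<Prod>k<i. (s ^^ Suc k) a)"
    unfolding normf_def by (subst prod.lessThan_Suc_shift) simp
  also have "\<dots> = s (normf s i a) * a" unfolding normf_def by (simp add: aut_prod[OF a] mult.commute)
  finally show ?thesis .
qed

lemma skew_eval_N: "degree F < N \<Longrightarrow> skew_eval s F a b = (\<Sum>i<N. coeff F i * Dop s a i b)"
proof -
  assume "degree F < N"
  then have "{..<N} = {..degree F} \<union> {degree F<..<N}" by auto
  moreover have "(\<Sum>i\<in>{degree F<..<N}. coeff F i * Dop s a i b) = 0"
    by (rule sum.neutral) (auto simp: coeff_eq_0)
  moreover have "(\<Sum>i\<in>{..degree F} \<union> {degree F<..<N}. coeff F i * Dop s a i b) =
     (\<Sum>i\<in>{..degree F}. coeff F i * Dop s a i b) + (\<Sum>i\<in>{degree F<..<N}. coeff F i * Dop s a i b)"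
    by (rule sum.union_disjoint) auto
  ultimately show ?thesis unfolding skew_eval_def by simp
qed

definition mulx :: "('a::comm_ring_1 \<Rightarrow> 'a) \<Rightarrow> 'a \<Rightarrow> 'a poly \<Rightarrow> 'a poly" where
  "mulx s c F = pCons 0 (map_poly s F) - smult c F"

lemma coeff_mulx: "ring_aut s \<Longrightarrow>
  coeff (mulx s c F) i = (case i of 0 \<Rightarrow> 0 | Suc j \<Rightarrow> s (coeff F j)) - c * coeff F i"
  unfolding mulx_def by (cases i) (auto simp: coeff_map_poly aut_zero coeff_pCons)

lemma skew_eval_mulx:
  assumes s: "ring_aut s"
  shows "skew_eval s (mulx s c F) a b = s (skew_eval s F a b) * a - c * skew_eval s F a b"
proof -
  define N where "N = Suc (Suc (degree F))"
  have dF: "degree F < N" by (simp add: N_def)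
  have dG: "degree (mulx s c F) < Suc N"
  proof -
    have "coeff (mulx s c F) i = 0" if "i \<ge> Suc N" for i
      using that by (cases i) (auto simp: coeff_mulx[OF s] coeff_eq_0 N_def aut_zero[OF s])
    then have "degree (mulx s c F) \<le> N" by (intro degree_le) (auto simp: Suc_le_eq)
    then show ?thesis by simp
  qed
  have Dop_Suc: "Dop s a (Suc i) b = s (Dop s a i b) * a" for i
    unfolding Dop_def using s by (simp add: normf_Suc aut_mult funpow_swap1 mult_ac)
  have "skew_eval s (mulx s c F) a b = (\<Sum>i<Suc N. coeff (mulx s c F) i * Dop s a i b)"
    by (rule skew_eval_N[OF dG])
  also have "\<dots> = (\<Sum>i<Suc N. (case i of 0 \<Rightarrow> 0 | Suc j \<Rightarrow> s (coeff F j)) * Dop s a i b)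
      - c * (\<Sum>i<Suc N. coeff F i * Dop s a i b)"
    unfolding coeff_mulx[OF s] left_diff_distrib sum_subtractf sum_distrib_left
    by (simp add: mult_ac del: sum.lessThan_Suc)
  also have "(\<Sum>i<Suc N. (case i of 0 \<Rightarrow> 0 | Suc j \<Rightarrow> s (coeff F j)) * Dop s a i b)
      = (\<Sum>i<N. s (coeff F i) * Dop s a (Suc i) b)"
    unfolding sum.lessThan_Suc_shift by simp
  also have "\<dots> = s (\<Sum>i<N. coeff F i * Dop s a i b) * a"
    by (simp add: aut_sum[OF s] aut_mult[OF s] Dop_Suc sum_distrib_right sum_distrib_left mult_ac)
  also have "(\<Sum>i<Suc N. coeff F i * Dop s a i b) = (\<Sum>i<N. coeff F i * Dop s a i b)"
    using dF by (simp add: coeff_eq_0)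
  finally show ?thesis using skew_eval_N[OF dF] by simp
qed

lemma degree_mulx:
  assumes s: "ring_aut s" and nt: "(0::'a::comm_ring_1) \<noteq> 1" and F: "lead_coeff F = (1::'a)"
  shows "degree (mulx s c F) = Suc (degree F) \<and> lead_coeff (mulx s c F) = 1"
proof -
  have c1: "coeff (mulx s c F) (Suc (degree F)) = 1"
    using F by (simp add: coeff_mulx[OF s] coeff_eq_0 aut_one[OF s])
  have "coeff (mulx s c F) i = 0" if "i > Suc (degree F)" for i
    using that by (cases i) (auto simp: coeff_mulx[OF s] coeff_eq_0 aut_zero[OF s])
  then have "degree (mulx s c F) \<le> Suc (degree F)" by (meson degree_le not_le)
  moreover have "degree (mulx s c F) \<ge> Suc (degree F)"
    using c1 nt by (metis le_degree zero_neq_one)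
  ultimately show ?thesis using c1 by simp
qed

lemma build:
  assumes s: "ring_aut s" and nt: "(0::'a::comm_ring_1) \<noteq> 1"
    and H: "\<And>y. \<exists>t. s y = t * y"
  shows "\<exists>F. lead_coeff F = (1::'a) \<and> degree F = length xs \<and>
     (\<forall>(a, v)\<in>set xs. skew_eval s F a v = 0)"
proof (induction xs)
  case Nil
  show ?case by (rule exI[of _ 1]) simp
next
  case (Cons p xs)
  obtain a v where p: "p = (a, v)" by force
  from Cons obtain F where F: "lead_coeff F = 1" "degree F = length xs"
    "\<forall>(a, v)\<in>set xs. skew_eval s F a v = 0" by blast
  obtain t where t: "s (skew_eval s F a v) = t * skew_eval s F a v" using H by blast
  define G where "G = mulx s (t * a) F"
  have "skew_eval s G a v = 0" unfolding G_def skew_eval_mulx[OF s] t by (simp add: mult_ac)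
  moreover have "skew_eval s G a' v' = 0" if "(a', v') \<in> set xs" for a' v'
    using F(3) that unfolding G_def skew_eval_mulx[OF s] by (auto simp: aut_zero[OF s])
  moreover have "lead_coeff G = 1" "degree G = length (p # xs)"
    using degree_mulx[OF s nt F(1), of "t * a"] F(2) by (auto simp: G_def)
  ultimately show ?case using p by (intro exI[of _ G]) auto
qed

lemma pig:
  fixes g :: "nat \<Rightarrow> 'b"
  assumes "finite (UNIV :: 'b set)"
  shows "\<exists>i j. i < j \<and> g i = g j"
proof -
  have "\<not> inj g"
  proof
    assume "inj g"
    then have "finite (UNIV :: nat set)" using inj_on_finite[of g UNIV UNIV] assms by auto
    then show False by simp
  qed
  then obtain i j where "i \<noteq> j" "g i = g j" unfolding inj_def by blast
  then show ?thesis by (metis linorder_neqE_nat)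
qed

definition pcong :: "'a::comm_ring_1 \<Rightarrow> 'a \<Rightarrow> 'a \<Rightarrow> bool" where
  "pcong p x y \<longleftrightarrow> (\<exists>z. x = y + p * z)"

lemma pcong_refl: "pcong p x x" unfolding pcong_def by (rule exI[of _ 0]) simp
lemma pcong_sym: "pcong p x y \<Longrightarrow> pcong p y x"
proof -
  assume "pcong p x y"
  then obtain z where "x = y + p * z" unfolding pcong_def by blast
  then have "y = x + p * (- z)" by simp
  then show ?thesis unfolding pcong_def by blast
qed
lemma pcong_trans: "pcong p x y \<Longrightarrow> pcong p y w \<Longrightarrow> pcong p x w"
proof -
  assume "pcong p x y" "pcong p y w"
  then obtain z z' where "x = y + p * z" "y = w + p * z'" unfolding pcong_def by blast
  then have "x = w + p * (z' + z)" by (simp add: algebra_simps)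
  then show ?thesis unfolding pcong_def by blast
qed
lemma pcong_mult: "pcong p x y \<Longrightarrow> pcong p x' y' \<Longrightarrow> pcong p (x * x') (y * y')"
proof -
  assume "pcong p x y" "pcong p x' y'"
  then obtain z z' where "x = y + p * z" "x' = y' + p * z'" unfolding pcong_def by blast
  then have "x * x' = y * y' + p * (z * y' + y * z' + p * z * z')" by (simp add: algebra_simps)
  then show ?thesis unfolding pcong_def by blast
qed
lemma pcong_power: "pcong p x y \<Longrightarrow> pcong p (x ^ k) (y ^ k)"
  by (induction k) (auto simp: pcong_refl pcong_mult)
lemma pcong_prod: "(\<And>i. i \<in> I \<Longrightarrow> pcong p (f i) (g i)) \<Longrightarrow> pcong p (prod f I) (prod g I)"
  by (induction I rule: infinite_finite_induct) (auto simp: pcong_refl pcong_mult)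
lemma pcong_zero: "pcong p x 0 \<longleftrightarrow> (\<exists>z. x = p * z)" unfolding pcong_def by simp
lemma pcong_aut: "ring_aut s \<Longrightarrow> s p = p \<Longrightarrow> pcong p x y \<Longrightarrow> pcong p (s x) (s y)"
proof -
  assume a: "ring_aut s" "s p = p" "pcong p x y"
  then obtain z where "x = y + p * z" unfolding pcong_def by blast
  then have "s x = s y + p * s z" using a by (simp add: aut_add aut_mult)
  then show ?thesis unfolding pcong_def by blast
qed

context
  fixes R :: "'a::comm_ring_1 set"
  assumes chainR: "chain_ring R"
begin

lemma subR: "subring R" using chainR by (simp add: chain_ring_def)
lemma R0: "0 \<in> R" using subR by (simp add: subring_def)
lemma R1: "1 \<in> R" using subR by (simp add: subring_def)
lemma Radd: "x \<in> R \<Longrightarrow> y \<in> R \<Longrightarrow> x + y \<in> R" using subR by (simp add: subring_def)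
lemma Rdiff: "x \<in> R \<Longrightarrow> y \<in> R \<Longrightarrow> x - y \<in> R" using subR by (simp add: subring_def)
lemma Rmult: "x \<in> R \<Longrightarrow> y \<in> R \<Longrightarrow> x * y \<in> R" using subR by (simp add: subring_def)
lemma Rneg: "x \<in> R \<Longrightarrow> - x \<in> R" using Rdiff[OF R0, of x] by simp
lemma Rsum: "(\<And>i. i \<in> I \<Longrightarrow> f i \<in> R) \<Longrightarrow> sum f I \<in> R"
  by (induction I rule: infinite_finite_induct) (auto simp: R0 Radd)
lemma Rprod: "(\<And>i. i \<in> I \<Longrightarrow> f i \<in> R) \<Longrightarrow> prod f I \<in> R"
  by (induction I rule: infinite_finite_induct) (auto simp: R1 Rmult)
lemma Rpow: "x \<in> R \<Longrightarrow> x ^ k \<in> R"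
  by (induction k) (auto simp: R1 Rmult)

lemma div_total:
  assumes x: "x \<in> R" and y: "y \<in> R"
  shows "(\<exists>r\<in>R. x = r * y) \<or> (\<exists>r\<in>R. y = r * x)"
proof -
  define I where "I z = {r * z | r. r \<in> R}" for z
  have id: "ideal_of R (I z)" if z: "z \<in> R" for z
  proof -
    have "I z \<subseteq> R" unfolding I_def using z Rmult by auto
    moreover have "0 \<in> I z" unfolding I_def using R0 by force
    moreover have "a + b \<in> I z" if ab: "a \<in> I z" "b \<in> I z" for a b
    proof -
      obtain r r' where "r \<in> R" "r' \<in> R" "a = r * z" "b = r' * z" using ab unfolding I_def by blast
      then have "r + r' \<in> R" "a + b = (r + r') * z" by (simp_all add: Radd distrib_right)
      then show ?thesis unfolding I_def by blast
    qed
    moreover have "c * a \<in> I z" if ca: "c \<in> R" "a \<in> I z" for a c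
    proof -
      obtain r where "r \<in> R" "a = r * z" using ca unfolding I_def by blast
      then have "c * r \<in> R" "c * a = (c * r) * z" using ca by (simp_all add: Rmult mult.assoc)
      then show ?thesis unfolding I_def by blast
    qed
    ultimately show ?thesis unfolding ideal_of_def by blast
  qed
  have "x \<in> I x" "y \<in> I y" unfolding I_def using x y R1 by force+
  moreover have "I x \<subseteq> I y \<or> I y \<subseteq> I x" using chainR id x y by (auto simp: chain_ring_def)
  ultimately show ?thesis unfolding I_def by blast
qed

lemma pivot:
  assumes "finite X" "X \<noteq> {}" "X \<subseteq> R"
  shows "\<exists>p\<in>X. \<forall>x\<in>X. \<exists>r\<in>R. x = r * p"
  using assms
proof (induction X rule: finite_ne_induct)
  case (singleton x)
  then show ?case using R1 by (auto intro!: bexI[of _ 1])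
next
  case (insert y X)
  then obtain p where p: "p \<in> X" "\<forall>x\<in>X. \<exists>r\<in>R. x = r * p" by auto
  have pR: "p \<in> R" "y \<in> R" using p insert by auto
  show ?case
  proof (cases "\<exists>r\<in>R. y = r * p")
    case True
    then show ?thesis using p by auto
  next
    case False
    then obtain r where r: "r \<in> R" "p = r * y" using div_total[OF pR] by blast
    have "\<forall>x\<in>insert y X. \<exists>r\<in>R. x = r * y"
    proof
      fix x assume "x \<in> insert y X"
      then show "\<exists>r\<in>R. x = r * y"
      proof
        assume "x = y" then show ?thesis using R1 by (auto intro!: bexI[of _ 1])
      next
        assume "x \<in> X"
        then obtain r' where "r' \<in> R" "x = r' * p" using p by auto
        then show ?thesis using r by (auto intro!: bexI[of _ "r' * r"] simp: Rmult mult.assoc)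
      qed
    qed
    then show ?thesis by auto
  qed
qed

abbreviation "M \<equiv> max_ideal R"

lemma M_sub: "M \<subseteq> R" unfolding max_ideal_def by auto
lemma M0: "(0::'a) \<noteq> 1 \<Longrightarrow> 0 \<in> M" unfolding max_ideal_def using R0 by auto
lemma M1: "1 \<notin> M" unfolding max_ideal_def using R1 by auto
lemma M_unit: "x \<in> R \<Longrightarrow> x \<notin> M \<Longrightarrow> \<exists>s\<in>R. x * s = 1" unfolding max_ideal_def by auto
lemma M_mult: assumes "r \<in> R" "x \<in> M" shows "r * x \<in> M"
proof -
  have x: "x \<in> R" "\<not> (\<exists>s\<in>R. x * s = 1)" using assms unfolding max_ideal_def by auto
  have "\<not> (\<exists>s\<in>R. (r * x) * s = 1)"
  proof
    assume "\<exists>s\<in>R. (r * x) * s = 1"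
    then obtain s where "s \<in> R" "x * (r * s) = 1" by (auto simp: mult_ac)
    then show False using x assms(1) Rmult by blast
  qed
  then show ?thesis using x assms Rmult unfolding max_ideal_def by blast
qed
lemma M_add: assumes "x \<in> M" "y \<in> M" shows "x + y \<in> M"
proof -
  have xy: "x \<in> R" "y \<in> R" using assms M_sub by auto
  have "\<exists>r\<in>R. \<exists>z\<in>M. x + y = (1 + r) * z"
  proof (cases "\<exists>r\<in>R. x = r * y")
    case True
    then obtain r where "r \<in> R" "x = r * y" by blast
    then have "x + y = (1 + r) * y" by (simp add: algebra_simps)
    then show ?thesis using \<open>r \<in> R\<close> assms by blast
  next
    case False
    then obtain r where "r \<in> R" "y = r * x" using div_total[OF xy] by blast
    then have "x + y = (1 + r) * x" by (simp add: algebra_simps)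
    then show ?thesis using \<open>r \<in> R\<close> assms by blast
  qed
  then obtain r z where "r \<in> R" "z \<in> M" "x + y = (1 + r) * z" by blast
  then show ?thesis using M_mult[of "1 + r" z] R1 Radd by auto
qed

lemma one_plus_M: assumes "x \<in> M" shows "1 + x \<notin> M"
proof
  assume "1 + x \<in> M"
  then have "(1 + x) + (- 1) * x \<in> M" by (rule M_add[OF _ M_mult[OF Rneg[OF R1] assms]])
  then show False using M1 by simp
qed

lemma q_ge2:
  assumes fin: "finite (UNIV :: 'a set)" and nt: "(0::'a) \<noteq> 1"
  shows "residue_card R \<ge> 2"
proof -
  have fM: "finite M" "finite R" using fin by (auto intro: finite_subset[of _ UNIV])
  have disj: "M \<inter> (\<lambda>x. 1 + x) ` M = {}" using one_plus_M by blast
  have sub: "M \<union> (\<lambda>x. 1 + x) ` M \<subseteq> R" using M_sub R1 Radd by blast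
  have "card (M \<union> (\<lambda>x. 1 + x) ` M) = card M + card ((\<lambda>x. 1 + x) ` M)"
    using fM disj by (simp add: card_Un_disjoint)
  also have "card ((\<lambda>x. 1 + x) ` M) = card M" by (rule card_image) (simp add: inj_on_def)
  finally have "2 * card M \<le> card R" using card_mono[OF fM(2) sub] by simp
  moreover have "card M > 0" using M0[OF nt] fM by (auto simp: card_gt_0_iff)
  ultimately have "2 * card M div card M \<le> card R div card M" by (intro div_le_mono)
  then show ?thesis unfolding residue_card_def using \<open>card M > 0\<close> by simp
qed

end

definition piR :: "'a::comm_ring_1 set \<Rightarrow> 'a" where
  "piR R = (SOME p. p \<in> max_ideal R \<and> (\<forall>x\<in>max_ideal R. \<exists>r\<in>R. x = r * p))"

context
  fixes R :: "'a::comm_ring_1 set" and \<sigma> :: "'a \<Rightarrow> 'a"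
  assumes finS: "finite (UNIV :: 'a set)"
    and nontriv: "(0::'a) \<noteq> 1"
    and chainR: "chain_ring R"
    and sigma_aut: "ring_aut \<sigma>"
    and sigma_fixed: "{y. \<sigma> y = y} = R"
    and sigma_frob: "\<forall>y. \<sigma> y - y ^ residue_card R \<in> ext_ideal R"
begin

lemma piR_props: "piR R \<in> max_ideal R" "\<forall>x\<in>max_ideal R. \<exists>r\<in>R. x = r * piR R"
proof -
  have "\<exists>p\<in>max_ideal R. \<forall>x\<in>max_ideal R. \<exists>r\<in>R. x = r * p"
    using pivot[OF chainR, of "max_ideal R"] M0[OF chainR nontriv] M_sub[OF chainR] finS
    by (auto intro: finite_subset[of _ UNIV])
  then have ex: "\<exists>p. p \<in> max_ideal R \<and> (\<forall>x\<in>max_ideal R. \<exists>r\<in>R. x = r * p)" by blast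
  have "piR R \<in> max_ideal R \<and> (\<forall>x\<in>max_ideal R. \<exists>r\<in>R. x = r * piR R)"
    unfolding piR_def by (rule someI_ex[OF ex])
  then show "piR R \<in> max_ideal R" "\<forall>x\<in>max_ideal R. \<exists>r\<in>R. x = r * piR R" by auto
qed

abbreviation "\<pi> \<equiv> piR R"

lemma pi_R: "\<pi> \<in> R" using piR_props(1) M_sub[OF chainR] by auto
lemma sigma_pi: "\<sigma> \<pi> = \<pi>" using pi_R sigma_fixed by auto
lemma sigma_R: "r \<in> R \<Longrightarrow> \<sigma> r = r" using sigma_fixed by auto

lemma M_pcong: "c \<in> max_ideal R \<Longrightarrow> pcong \<pi> c 0"
  using piR_props(2) unfolding pcong_def by (auto simp: mult.commute)

lemma ext_pcong: assumes "y \<in> ext_ideal R" shows "pcong \<pi> y 0"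
proof -
  obtain k :: nat and c s where ks: "\<forall>i<k. c i \<in> max_ideal R" "y = (\<Sum>i<k. c i * s i)"
    using assms unfolding ext_ideal_def mem_Collect_eq by blast
  have "\<forall>i<k. \<exists>z. c i = \<pi> * z" using ks(1) M_pcong unfolding pcong_def by auto
  then obtain z where z: "\<forall>i<k. c i = \<pi> * z i" by metis
  have "y = \<pi> * (\<Sum>i<k. z i * s i)" unfolding ks(2) sum_distrib_left
    by (rule sum.cong) (auto simp: z mult.assoc)
  then show ?thesis unfolding pcong_def by auto
qed

lemma frob_pcong: "pcong \<pi> (\<sigma> y) (y ^ residue_card R)"
proof -
  obtain z where "\<sigma> y - y ^ residue_card R = \<pi> * z"
    using ext_pcong sigma_frob unfolding pcong_def by fastforce
  then have "\<sigma> y = y ^ residue_card R + \<pi> * z" by (simp add: algebra_simps)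
  then show ?thesis unfolding pcong_def by blast
qed

lemma frob_k: "pcong \<pi> ((\<sigma> ^^ k) y) (y ^ (residue_card R ^ k))"
proof (induction k)
  case 0 then show ?case by (simp add: pcong_refl)
next
  case (Suc k)
  have "pcong \<pi> (\<sigma> ((\<sigma> ^^ k) y)) (((\<sigma> ^^ k) y) ^ residue_card R)" by (rule frob_pcong)
  moreover have "pcong \<pi> (((\<sigma> ^^ k) y) ^ residue_card R) ((y ^ (residue_card R ^ k)) ^ residue_card R)"
    by (rule pcong_power[OF Suc])
  ultimately have "pcong \<pi> ((\<sigma> ^^ Suc k) y) ((y ^ (residue_card R ^ k)) ^ residue_card R)"
    by (simp add: pcong_trans)
  then show ?case by (simp add: power_mult[symmetric] mult.commute)
qed

lemma sigma_order: "\<exists>n>0. \<sigma> ^^ n = id"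
proof -
  have "finite (UNIV :: ('a \<Rightarrow> 'a) set)"
    using finite_set_of_finite_funs[OF finS finS, of undefined] by simp
  then obtain i j where ij: "i < j" "\<sigma> ^^ i = \<sigma> ^^ j" using pig[of "\<lambda>k. \<sigma> ^^ k"] by blast
  have inj: "inj (\<sigma> ^^ i)" using aut_funpow[OF sigma_aut, of i] by (simp add: ring_aut_def bij_is_inj)
  have "\<sigma> ^^ j = \<sigma> ^^ i \<circ> \<sigma> ^^ (j - i)" using ij(1) funpow_add[of i "j - i" \<sigma>] by simp
  then have "(\<sigma> ^^ i) ((\<sigma> ^^ (j - i)) x) = (\<sigma> ^^ i) x" for x using ij(2) by (metis comp_apply)
  then have "(\<sigma> ^^ (j - i)) x = x" for x using inj by (simp add: inj_eq)
  then show ?thesis using ij(1) by (intro exI[of _ "j - i"]) auto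
qed

lemma nonunit_pcong:
  assumes nu: "\<not> (\<exists>z. y * z = 1)"
  shows "pcong \<pi> y 0"
proof -
  obtain n where n: "n > 0" "\<sigma> ^^ n = id" using sigma_order by blast
  then obtain n' where n': "n = Suc n'" using gr0_implies_Suc by blast
  define f where "f k = (\<sigma> ^^ k) y" for k
  define Nm where "Nm = (\<Prod>k<n. f k)"
  have fn: "f (Suc n') = f 0" using n n' by (simp add: f_def)
  have Nm_shift: "Nm = y * (\<Prod>k<n'. f (Suc k))"
    unfolding Nm_def n' by (subst prod.lessThan_Suc_shift) (simp add: f_def)
  have "\<sigma> Nm = (\<Prod>k<n. f (Suc k))" unfolding Nm_def by (simp add: aut_prod[OF sigma_aut] f_def)
  also have "\<dots> = Nm"
  proof -
    have fn': "\<sigma> ((\<sigma> ^^ n') y) = y" using fn by (simp add: f_def)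
    show ?thesis unfolding n' Nm_shift by (simp add: fn' f_def mult.commute)
  qed
  finally have "Nm \<in> R" using sigma_fixed by auto
  moreover have "\<not> (\<exists>s\<in>R. Nm * s = 1)"
  proof
    assume "\<exists>s\<in>R. Nm * s = 1"
    then obtain s where "Nm * s = 1" by blast
    then have "y * ((\<Prod>k<n'. f (Suc k)) * s) = 1" unfolding Nm_shift by (simp add: mult.assoc)
    then show False using nu by blast
  qed
  ultimately have "Nm \<in> max_ideal R" unfolding max_ideal_def by blast
  then have N0: "pcong \<pi> Nm 0" by (rule M_pcong)
  define q where "q = residue_card R"
  define e where "e = (\<Sum>k<n. q ^ k)"
  have "pcong \<pi> Nm (\<Prod>k<n. y ^ (q ^ k))" unfolding Nm_def f_def q_def
    by (rule pcong_prod) (rule frob_k)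
  then have ye: "pcong \<pi> (y ^ e) 0" unfolding e_def power_sum
    by (rule pcong_trans[OF pcong_sym N0])
  have e1: "e \<ge> 1" unfolding e_def n' sum.lessThan_Suc_shift by simp
  define Q where "Q = q ^ n"
  have q2: "q \<ge> 2" unfolding q_def by (rule q_ge2[OF chainR finS nontriv])
  have "q ^ 1 \<le> q ^ n" by (rule power_increasing) (use n q2 in auto)
  then have Q2: "Q \<ge> 2" unfolding Q_def using q2 by simp
  have yQ: "pcong \<pi> y (y ^ Q)"
    using frob_k[of n y] n(2) unfolding Q_def q_def by simp
  have yQj: "pcong \<pi> y (y ^ (Q ^ j))" for j
  proof (induction j)
    case 0 then show ?case by (simp add: pcong_refl)
  next
    case (Suc j)
    have "pcong \<pi> (y ^ Q) ((y ^ (Q ^ j)) ^ Q)" by (rule pcong_power[OF Suc])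
    then have "pcong \<pi> y ((y ^ (Q ^ j)) ^ Q)" by (rule pcong_trans[OF yQ])
    then show ?case by (simp add: power_mult[symmetric] mult.commute)
  qed
  have "e < 2 ^ e" by (rule less_exp)
  also have "(2::nat) ^ e \<le> Q ^ e" using Q2 by (rule power_mono) simp
  finally have eQ: "e \<le> Q ^ e" by simp
  have "Q ^ e = e + (Q ^ e - e)" using eQ by simp
  then have "y ^ (Q ^ e) = y ^ e * y ^ (Q ^ e - e)" by (metis power_add)
  moreover have "pcong \<pi> (y ^ e * y ^ (Q ^ e - e)) (0 * y ^ (Q ^ e - e))"
    by (rule pcong_mult[OF ye pcong_refl])
  ultimately have "pcong \<pi> (y ^ (Q ^ e)) 0" by simp
  then show ?thesis by (rule pcong_trans[OF yQj[of e]])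
qed

lemma pi_nilpotent: "\<exists>N. \<pi> ^ N = 0"
proof -
  obtain i j where ij: "i < j" "\<pi> ^ i = \<pi> ^ j" using pig[OF finS, of "\<lambda>k. \<pi> ^ k"] by blast
  define d where "d = j - i"
  have d: "d \<ge> 1" "j = i + d" using ij(1) by (auto simp: d_def)
  have pdM: "\<pi> ^ d \<in> max_ideal R"
  proof -
    obtain d' where "d = Suc d'" using d(1) by (cases d) auto
    then have "\<pi> ^ d = \<pi> ^ d' * \<pi>" by (simp add: mult.commute)
    then show ?thesis using M_mult[OF chainR Rpow[OF chainR pi_R] piR_props(1)] by simp
  qed
  have "1 - \<pi> ^ d \<in> R" using Rdiff[OF chainR R1[OF chainR] Rpow[OF chainR pi_R]] .
  moreover have "1 - \<pi> ^ d \<notin> max_ideal R"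
    using one_plus_M[OF chainR M_mult[OF chainR Rneg[OF chainR R1[OF chainR]] pdM]] by simp
  ultimately obtain s where "(1 - \<pi> ^ d) * s = 1" using M_unit[OF chainR] by blast
  have "\<pi> ^ i * (1 - \<pi> ^ d) = 0" using ij(2) d(2) by (simp add: algebra_simps power_add)
  then have "\<pi> ^ i * (1 - \<pi> ^ d) * s = 0" by simp
  then have "\<pi> ^ i = 0" using \<open>(1 - \<pi> ^ d) * s = 1\<close> by (simp add: mult.assoc)
  then show ?thesis by blast
qed

lemma sigma_mult_form: "\<exists>t. \<sigma> y = t * y"
proof -
  have P: "(\<exists>t. \<sigma> x = t * x) \<or> (\<exists>z. x = \<pi> ^ k * z)" for k x
  proof (induction k arbitrary: x)
    case 0 then show ?case by auto
  next
    case (Suc k)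
    show ?case
    proof (cases "\<exists>t. \<sigma> x = t * x")
      case False
      then obtain z where z: "x = \<pi> ^ k * z" using Suc by blast
      show ?thesis
      proof (cases "\<exists>z'. z * z' = 1")
        case True
        then obtain z' where z': "z * z' = 1" by blast
        have "\<sigma> x = \<pi> ^ k * \<sigma> z" unfolding z
          by (simp add: aut_mult[OF sigma_aut] aut_power[OF sigma_aut] sigma_pi)
        also have "\<dots> = (\<sigma> z * z') * x"
        proof -
          have "(\<sigma> z * z') * x = (\<pi> ^ k * \<sigma> z) * (z * z')" unfolding z by (simp add: mult_ac)
          then show ?thesis using z' by simp
        qed
        finally show ?thesis by blast
      next
        case False
        then obtain w where "z = \<pi> * w" using nonunit_pcong unfolding pcong_def by force
        then have "x = \<pi> ^ Suc k * w" unfolding z by (simp add: mult.assoc)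
        then show ?thesis by blast
      qed
    qed auto
  qed
  obtain N where N: "\<pi> ^ N = 0" using pi_nilpotent by blast
  show ?thesis using P[of y N] N by (auto simp: aut_zero[OF sigma_aut])
qed

end

definition idm :: "nat \<Rightarrow> nat \<Rightarrow> 'a::comm_ring_1" where
  "idm x y = (if x = y then 1 else 0)"

definition eqv :: "'a::comm_ring_1 set \<Rightarrow> nat \<Rightarrow> nat \<Rightarrow> (nat \<Rightarrow> nat \<Rightarrow> 'a) \<Rightarrow> (nat \<Rightarrow> nat \<Rightarrow> 'a) \<Rightarrow> bool" where
  "eqv R m s A B \<longleftrightarrow> (\<exists>P Q. invertible_over R m P \<and> invertible_over R s Q \<and>
      (\<forall>i<m. \<forall>j<s. B i j = mat_mult (mat_mult P m A) s Q i j))"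

lemma mm_cong: "(\<And>l. l < k \<Longrightarrow> A i l = A' i l) \<Longrightarrow> (\<And>l. l < k \<Longrightarrow> B l j = B' l j) \<Longrightarrow>
   mat_mult A k B i j = mat_mult A' k B' i j"
  unfolding mat_mult_def by (rule sum.cong) auto

lemma mm_assoc: "mat_mult (mat_mult A k B) n C = mat_mult A k (mat_mult B n C)"
  unfolding mat_mult_def
  by (auto simp: sum_distrib_left sum_distrib_right mult.assoc intro!: ext sum.swap)

lemma mm_idl: "i < n \<Longrightarrow> mat_mult idm n A i j = A i j"
proof -
  assume "i < n"
  have "mat_mult idm n A i j = (\<Sum>l<n. if i = l then A l j else 0)"
    unfolding mat_mult_def idm_def by (rule sum.cong) auto
  then show ?thesis using \<open>i < n\<close> by simp
qed

lemma mm_idr: "j < n \<Longrightarrow> mat_mult A n idm i j = A i j"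
proof -
  assume "j < n"
  have "mat_mult A n idm i j = (\<Sum>l<n. if l = j then A i l else 0)"
    unfolding mat_mult_def idm_def by (rule sum.cong) auto
  then show ?thesis using \<open>j < n\<close> by simp
qed

lemma mm_idl': "(\<And>a b. a < n \<Longrightarrow> b < n \<Longrightarrow> E a b = idm a b) \<Longrightarrow> i < n \<Longrightarrow>
    mat_mult E n A i j = A i j"
  using mm_cong[of n E i idm A j A] mm_idl[of i n A j] by simp

lemma inv_idm: "0 \<in> R \<Longrightarrow> 1 \<in> R \<Longrightarrow> invertible_over R n idm"
  unfolding invertible_over_def
  by (intro conjI exI[of _ idm]) (auto simp: mm_idl idm_def)

lemma eqv_agree: "0 \<in> R \<Longrightarrow> 1 \<in> R \<Longrightarrow> (\<And>i j. i < m \<Longrightarrow> j < s \<Longrightarrow> B i j = A i j) \<Longrightarrow> eqv R m s A B"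
  unfolding eqv_def
  by (intro exI[of _ idm] conjI inv_idm) (auto simp: mm_idr mm_idl)

lemma mm_range: "(\<And>a b. a < m \<Longrightarrow> b < s \<Longrightarrow> B a b = B' a b) \<Longrightarrow>
   mat_mult (mat_mult P m B) s Q i j = mat_mult (mat_mult P m B') s Q i j"
  by (rule mm_cong) (auto intro: mm_cong)

context
  fixes R :: "'a::comm_ring_1 set"
  assumes chainR: "chain_ring R"
begin

lemma mm_R: "(\<And>l. l < k \<Longrightarrow> A i l \<in> R) \<Longrightarrow> (\<And>l. l < k \<Longrightarrow> B l j \<in> R) \<Longrightarrow>
  mat_mult A k B i j \<in> R"
  unfolding mat_mult_def by (rule Rsum[OF chainR]) (auto intro: Rmult[OF chainR])

definition mp :: "'a \<Rightarrow> 'a \<Rightarrow> bool" where "mp p x \<longleftrightarrow> (\<exists>r\<in>R. x = r * p)"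

lemma mp_sum: "finite I \<Longrightarrow> (\<And>i. i \<in> I \<Longrightarrow> mp p (f i)) \<Longrightarrow> mp p (sum f I)"
proof (induction I rule: finite_induct)
  case empty then show ?case unfolding mp_def using R0[OF chainR] by (auto intro!: bexI[of _ 0])
next
  case (insert x F)
  then obtain r r' where "r \<in> R" "r' \<in> R" "f x = r * p" "sum f F = r' * p" unfolding mp_def by blast
  then have "sum f (insert x F) = (r + r') * p" "r + r' \<in> R" using insert(1,2)
    by (simp_all add: distrib_right Radd[OF chainR])
  then show ?case unfolding mp_def by blast
qed

lemma mp_multL: "c \<in> R \<Longrightarrow> mp p x \<Longrightarrow> mp p (c * x)"
  unfolding mp_def by (auto simp: mult.assoc[symmetric] intro: Rmult[OF chainR])
lemma mp_multR: "c \<in> R \<Longrightarrow> mp p x \<Longrightarrow> mp p (x * c)"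
  using mp_multL by (simp add: mult.commute)

lemma mm_mpL: "(\<And>l. l < k \<Longrightarrow> A i l \<in> R) \<Longrightarrow> (\<And>l. l < k \<Longrightarrow> mp p (B l j)) \<Longrightarrow>
  mp p (mat_mult A k B i j)"
  unfolding mat_mult_def by (rule mp_sum) (auto intro: mp_multL)
lemma mm_mpR: "(\<And>l. l < k \<Longrightarrow> mp p (A i l)) \<Longrightarrow> (\<And>l. l < k \<Longrightarrow> B l j \<in> R) \<Longrightarrow>
  mp p (mat_mult A k B i j)"
  unfolding mat_mult_def by (rule mp_sum) (auto intro: mp_multR)

lemma inv_mult:
  assumes P: "invertible_over R n P" and Q: "invertible_over R n Q"
  shows "invertible_over R n (mat_mult P n Q)"
proof -
  obtain P' where P': "\<forall>i<n. \<forall>j<n. P i j \<in> R" "\<forall>i<n. \<forall>j<n. P' i j \<in> R"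
    "\<forall>i<n. \<forall>j<n. mat_mult P n P' i j = idm i j \<and> mat_mult P' n P i j = idm i j"
    using P unfolding invertible_over_def idm_def by blast
  obtain Q' where Q': "\<forall>i<n. \<forall>j<n. Q i j \<in> R" "\<forall>i<n. \<forall>j<n. Q' i j \<in> R"
    "\<forall>i<n. \<forall>j<n. mat_mult Q n Q' i j = idm i j \<and> mat_mult Q' n Q i j = idm i j"
    using Q unfolding invertible_over_def idm_def by blast
  have 1: "mat_mult (mat_mult P n Q) n (mat_mult Q' n P') i j = idm i j" if "i < n" "j < n" for i j
  proof -
    have "mat_mult (mat_mult P n Q) n (mat_mult Q' n P') i j
        = mat_mult P n (mat_mult (mat_mult Q n Q') n P') i j" by (simp add: mm_assoc)
    also have "\<dots> = mat_mult P n P' i j"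
      by (rule mm_cong) (auto intro!: mm_idl' simp: Q'(3) that)
    finally show ?thesis using P'(3) that by simp
  qed
  have 2: "mat_mult (mat_mult Q' n P') n (mat_mult P n Q) i j = idm i j" if "i < n" "j < n" for i j
  proof -
    have "mat_mult (mat_mult Q' n P') n (mat_mult P n Q) i j
        = mat_mult Q' n (mat_mult (mat_mult P' n P) n Q) i j" by (simp add: mm_assoc)
    also have "\<dots> = mat_mult Q' n Q i j"
      by (rule mm_cong) (auto intro!: mm_idl' simp: P'(3) that)
    finally show ?thesis using Q'(3) that by simp
  qed
  have R1: "\<forall>i<n. \<forall>j<n. mat_mult P n Q i j \<in> R"
    by (intro allI impI mm_R) (simp_all add: P'(1) Q'(1))
  have R2: "\<forall>i<n. \<forall>j<n. mat_mult Q' n P' i j \<in> R"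
    by (intro allI impI mm_R) (simp_all add: P'(2) Q'(2))
  have "\<forall>i<n. \<forall>j<n. mat_mult (mat_mult P n Q) n (mat_mult Q' n P') i j = (if i = j then 1 else 0) \<and>
      mat_mult (mat_mult Q' n P') n (mat_mult P n Q) i j = (if i = j then 1 else 0)"
    using 1 2 unfolding idm_def by simp
  then show ?thesis unfolding invertible_over_def using R1 R2 by blast
qed

lemma eqv_trans:
  assumes "eqv R m s A B" "eqv R m s B C"
  shows "eqv R m s A C"
proof -
  obtain P1 Q1 where 1: "invertible_over R m P1" "invertible_over R s Q1"
    "\<forall>i<m. \<forall>j<s. B i j = mat_mult (mat_mult P1 m A) s Q1 i j" using assms(1) unfolding eqv_def by blast
  obtain P2 Q2 where 2: "invertible_over R m P2" "invertible_over R s Q2"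
    "\<forall>i<m. \<forall>j<s. C i j = mat_mult (mat_mult P2 m B) s Q2 i j" using assms(2) unfolding eqv_def by blast
  have "C i j = mat_mult (mat_mult (mat_mult P2 m P1) m A) s (mat_mult Q1 s Q2) i j" if "i < m" "j < s" for i j
  proof -
    have "C i j = mat_mult (mat_mult P2 m (mat_mult (mat_mult P1 m A) s Q1)) s Q2 i j"
      using 2(3) that by (simp add: 1(3) mm_range[of m s B])
    also have "\<dots> = mat_mult (mat_mult (mat_mult P2 m P1) m A) s (mat_mult Q1 s Q2) i j"
      by (simp add: mm_assoc)
    finally show ?thesis .
  qed
  moreover have "invertible_over R m (mat_mult P2 m P1)" by (rule inv_mult[OF 2(1) 1(1)])
  moreover have "invertible_over R s (mat_mult Q1 s Q2)" by (rule inv_mult[OF 1(2) 2(2)])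
  ultimately show ?thesis unfolding eqv_def by blast
qed

lemma eqv_refl: "eqv R m s A A" using eqv_agree R0[OF chainR] R1[OF chainR] by blast

end

definition tr :: "nat \<Rightarrow> nat \<Rightarrow> nat \<Rightarrow> nat" where
  "tr a b x = (if x = a then b else if x = b then a else x)"

definition prm :: "nat \<Rightarrow> nat \<Rightarrow> nat \<Rightarrow> nat \<Rightarrow> 'a::comm_ring_1" where
  "prm a b x y = (if y = tr a b x then 1 else 0)"

lemma tr_tr: "tr a b (tr a b x) = x" unfolding tr_def by auto
lemma tr_lt: "a < n \<Longrightarrow> b < n \<Longrightarrow> x < n \<Longrightarrow> tr a b x < n" unfolding tr_def by auto
lemma prm_alt: "prm a b x y = (if x = tr a b y then 1 else 0)" unfolding prm_def using tr_tr by metis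

lemma mm_prmL: "a < n \<Longrightarrow> b < n \<Longrightarrow> i < n \<Longrightarrow> mat_mult (prm a b) n A i j = A (tr a b i) j"
proof -
  assume abi: "a < n" "b < n" "i < n"
  have "mat_mult (prm a b) n A i j = (\<Sum>l<n. if l = tr a b i then A l j else 0)"
    unfolding mat_mult_def prm_def by (rule sum.cong) auto
  then show ?thesis using tr_lt[OF abi] by simp
qed

lemma mm_prmR: "a < n \<Longrightarrow> b < n \<Longrightarrow> j < n \<Longrightarrow> mat_mult A n (prm a b) i j = A i (tr a b j)"
proof -
  assume abj: "a < n" "b < n" "j < n"
  have "mat_mult A n (prm a b) i j = (\<Sum>l<n. if l = tr a b j then A i l else 0)"
    unfolding mat_mult_def by (rule sum.cong) (auto simp: prm_alt)
  then show ?thesis using tr_lt[OF abj] by simp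
qed

definition Lm :: "(nat \<Rightarrow> 'a) \<Rightarrow> nat \<Rightarrow> nat \<Rightarrow> 'a::comm_ring_1" where
  "Lm r x y = idm x y + (if y = 0 \<and> x \<noteq> 0 then r x else 0)"
definition Um :: "(nat \<Rightarrow> 'a) \<Rightarrow> nat \<Rightarrow> nat \<Rightarrow> 'a::comm_ring_1" where
  "Um c x y = idm x y + (if x = 0 \<and> y \<noteq> 0 then c y else 0)"

lemma mm_LmL: "0 < n \<Longrightarrow> i < n \<Longrightarrow> mat_mult (Lm r) n A i j = A i j + (if i \<noteq> 0 then r i * A 0 j else 0)"
proof -
  assume n: "0 < n" "i < n"
  have "mat_mult (Lm r) n A i j = mat_mult idm n A i j + (\<Sum>l<n. if l = 0 then (if i \<noteq> 0 then r i * A 0 j else 0) else 0)"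
    unfolding mat_mult_def Lm_def distrib_right sum.distrib by (intro arg_cong2[where f = "(+)"] sum.cong) auto
  then show ?thesis using n by (simp add: mm_idl)
qed

lemma mm_UmR: "0 < n \<Longrightarrow> j < n \<Longrightarrow> mat_mult A n (Um c) i j = A i j + (if j \<noteq> 0 then A i 0 * c j else 0)"
proof -
  assume n: "0 < n" "j < n"
  have "mat_mult A n (Um c) i j = mat_mult A n idm i j + (\<Sum>l<n. if l = 0 then (if j \<noteq> 0 then A i 0 * c j else 0) else 0)"
    unfolding mat_mult_def Um_def distrib_left sum.distrib by (intro arg_cong2[where f = "(+)"] sum.cong) auto
  then show ?thesis using n by (simp add: mm_idr)
qed

definition blk :: "'a \<Rightarrow> (nat \<Rightarrow> nat \<Rightarrow> 'a) \<Rightarrow> nat \<Rightarrow> nat \<Rightarrow> 'a::comm_ring_1" where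
  "blk p X x y = (if x = 0 \<and> y = 0 then p else if x = 0 \<or> y = 0 then 0 else X (x - 1) (y - 1))"

lemma blk_mult: "mat_mult (blk a X) (Suc k) (blk b Y) = blk (a * b) (mat_mult X k Y)"
proof (intro ext)
  fix x y
  show "mat_mult (blk a X) (Suc k) (blk b Y) x y = blk (a * b) (mat_mult X k Y) x y"
    unfolding mat_mult_def sum.lessThan_Suc_shift
    by (cases x; cases y) (simp_all add: blk_def)
qed

context
  fixes R :: "'a::comm_ring_1 set"
  assumes chainR: "chain_ring R"
begin

lemma inv_prm: "a < n \<Longrightarrow> b < n \<Longrightarrow> invertible_over R n (prm a b)"
  unfolding invertible_over_def using R0[OF chainR] R1[OF chainR]
  by (intro conjI exI[of _ "prm a b"] allI impI) (simp_all add: mm_prmL prm_def tr_tr)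

lemma inv_Lm: assumes "0 < n" "\<And>x. x < n \<Longrightarrow> r x \<in> R" shows "invertible_over R n (Lm r)"
proof -
  have e: "Lm r i j \<in> R" "Lm (\<lambda>x. - r x) i j \<in> R" if "i < n" for i j
    using that assms R0[OF chainR] R1[OF chainR] Rneg[OF chainR] Radd[OF chainR]
    by (auto simp: Lm_def idm_def)
  have "mat_mult (Lm r) n (Lm (\<lambda>x. - r x)) i j = (if i = j then 1 else 0) \<and>
        mat_mult (Lm (\<lambda>x. - r x)) n (Lm r) i j = (if i = j then 1 else 0)" if "i < n" for i j
    using that assms(1) by (simp add: mm_LmL) (auto simp: Lm_def idm_def)
  then show ?thesis unfolding invertible_over_def using e
    by (intro conjI exI[of _ "Lm (\<lambda>x. - r x)"]) auto
qed

lemma inv_Um: assumes "0 < n" "\<And>x. x < n \<Longrightarrow> c x \<in> R" shows "invertible_over R n (Um c)"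
proof -
  have e: "Um c i j \<in> R" "Um (\<lambda>x. - c x) i j \<in> R" if "j < n" for i j
    using that assms R0[OF chainR] R1[OF chainR] Rneg[OF chainR] Radd[OF chainR]
    by (auto simp: Um_def idm_def)
  have "mat_mult (Um c) n (Um (\<lambda>x. - c x)) i j = (if i = j then 1 else 0) \<and>
        mat_mult (Um (\<lambda>x. - c x)) n (Um c) i j = (if i = j then 1 else 0)" if "j < n" for i j
    using that assms(1) by (simp add: mm_UmR) (auto simp: Um_def idm_def)
  then show ?thesis unfolding invertible_over_def using e
    by (intro conjI exI[of _ "Um (\<lambda>x. - c x)"]) auto
qed

lemma inv_blk: assumes "invertible_over R n P" shows "invertible_over R (Suc n) (blk 1 P)"
proof -
  obtain P' where P': "\<forall>i<n. \<forall>j<n. P i j \<in> R" "\<forall>i<n. \<forall>j<n. P' i j \<in> R"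
    "\<forall>i<n. \<forall>j<n. mat_mult P n P' i j = (if i = j then 1 else 0) \<and> mat_mult P' n P i j = (if i = j then 1 else 0)"
    using assms unfolding invertible_over_def by blast
  have e: "blk 1 P i j \<in> R" "blk 1 P' i j \<in> R" if "i < Suc n" "j < Suc n" for i j
    using that P'(1,2) R0[OF chainR] R1[OF chainR] by (auto simp: blk_def)
  have "blk 1 (mat_mult P n P') i j = (if i = j then 1 else 0) \<and>
        blk 1 (mat_mult P' n P) i j = (if i = j then 1 else 0)" if "i < Suc n" "j < Suc n" for i j
    using that P'(3) by (auto simp: blk_def)
  then have m: "\<forall>i<Suc n. \<forall>j<Suc n. mat_mult (blk 1 P) (Suc n) (blk 1 P') i j = (if i = j then 1 else 0) \<and>
        mat_mult (blk 1 P') (Suc n) (blk 1 P) i j = (if i = j then 1 else 0)"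
    unfolding blk_mult by simp
  show ?thesis unfolding invertible_over_def using e
    by (intro conjI exI[of _ "blk 1 P'"] allI impI) (simp_all add: m)
qed

lemma eqv_blk: assumes "eqv R m s A B" shows "eqv R (Suc m) (Suc s) (blk p A) (blk p B)"
proof -
  obtain P Q where PQ: "invertible_over R m P" "invertible_over R s Q"
    "\<forall>i<m. \<forall>j<s. B i j = mat_mult (mat_mult P m A) s Q i j" using assms unfolding eqv_def by blast
  have "blk p B i j = mat_mult (mat_mult (blk 1 P) (Suc m) (blk p A)) (Suc s) (blk 1 Q) i j"
    if "i < Suc m" "j < Suc s" for i j
    using that PQ(3) by (simp add: blk_mult) (auto simp: blk_def)
  then show ?thesis unfolding eqv_def using inv_blk PQ(1,2) by blast
qed

end

context
  fixes R :: "'a::comm_ring_1 set"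
  assumes chainR: "chain_ring R"
begin

lemma snf:
  assumes "\<forall>i<m. \<forall>j<s. A i j \<in> R"
  shows "\<exists>D. eqv R m s A D \<and> (\<forall>i<m. \<forall>j<s. i \<noteq> j \<longrightarrow> D i j = 0) \<and>
     (\<forall>k. Suc k < min m s \<longrightarrow> (\<exists>r\<in>R. D (Suc k) (Suc k) = r * D k k))"
  using assms
proof (induction m arbitrary: s A)
  case 0
  show ?case by (intro exI[of _ A] conjI eqv_refl[OF chainR]) auto
next
  case (Suc m)
  show ?case
  proof (cases s)
    case 0
    show ?thesis by (intro exI[of _ A] conjI eqv_refl[OF chainR]) (auto simp: 0)
  next
    case (Suc s')
    note s = this
    have AR: "A i j \<in> R" if "i < Suc m" "j < Suc s'" for i j using Suc.prems that s by blast
    define X where "X = (\<lambda>(i, j). A i j) ` ({..<Suc m} \<times> {..<Suc s'})"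
    have X: "finite X" "X \<noteq> {}" "X \<subseteq> R" unfolding X_def using AR by auto
    obtain p where p: "p \<in> X" "\<forall>x\<in>X. \<exists>r\<in>R. x = r * p" using pivot[OF chainR X] by blast
    obtain i0 j0 where ij0: "i0 < Suc m" "j0 < Suc s'" "p = A i0 j0" using p(1) unfolding X_def by auto
    have pR: "p \<in> R" using X(3) p(1) by blast
    have Amp: "mp R p (A i j)" if "i < Suc m" "j < Suc s'" for i j
    proof -
      have "A i j \<in> X" unfolding X_def using that by force
      then show ?thesis using p(2) unfolding mp_def[OF chainR] by blast
    qed
    define A1 where "A1 = mat_mult (mat_mult (prm 0 i0) (Suc m) A) (Suc s') (prm 0 j0)"
    have e1: "eqv R (Suc m) s A A1" unfolding eqv_def s A1_def
      using inv_prm[OF chainR, of 0 "Suc m" i0] inv_prm[OF chainR, of 0 "Suc s'" j0] ij0 by blast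
    have A1v: "A1 i j = A (tr 0 i0 i) (tr 0 j0 j)" if "i < Suc m" "j < Suc s'" for i j
      unfolding A1_def using that ij0 by (simp add: mm_prmR mm_prmL)
    have A1R: "A1 i j \<in> R" if "i < Suc m" "j < Suc s'" for i j
      using A1v[OF that] AR tr_lt[of 0 "Suc m" i0 i] tr_lt[of 0 "Suc s'" j0 j] that ij0 by simp
    have A1mp: "mp R p (A1 i j)" if "i < Suc m" "j < Suc s'" for i j
      using A1v[OF that] Amp tr_lt[of 0 "Suc m" i0 i] tr_lt[of 0 "Suc s'" j0 j] that ij0 by simp
    have A100: "A1 0 0 = p" using A1v[of 0 0] ij0 by (simp add: tr_def)
    define r where "r i = (SOME r. r \<in> R \<and> A1 i 0 = r * p)" for i
    define c where "c j = (SOME r. r \<in> R \<and> A1 0 j = r * p)" for j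
    have r: "r i \<in> R \<and> A1 i 0 = r i * p" if "i < Suc m" for i
    proof -
      have "\<exists>r. r \<in> R \<and> A1 i 0 = r * p" using A1mp[OF that, of 0] unfolding mp_def[OF chainR] by blast
      then show ?thesis unfolding r_def by (rule someI_ex)
    qed
    have c: "c j \<in> R \<and> A1 0 j = c j * p" if "j < Suc s'" for j
    proof -
      have "\<exists>r. r \<in> R \<and> A1 0 j = r * p" using A1mp[of 0 j] that unfolding mp_def[OF chainR] by blast
      then show ?thesis unfolding c_def by (rule someI_ex)
    qed
    define B where "B = mat_mult (Lm (\<lambda>i. - r i)) (Suc m) A1"
    define A2 where "A2 = mat_mult B (Suc s') (Um (\<lambda>j. - c j))"
    have invL: "invertible_over R (Suc m) (Lm (\<lambda>i. - r i))"
      by (rule inv_Lm[OF chainR]) (auto intro: Rneg[OF chainR] simp: r)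
    have invU: "invertible_over R (Suc s') (Um (\<lambda>j. - c j))"
      by (rule inv_Um[OF chainR]) (auto intro: Rneg[OF chainR] simp: c)
    have e2: "eqv R (Suc m) s A1 A2" unfolding eqv_def s A2_def B_def using invL invU by blast
    have Bv: "B i j = A1 i j + (if i \<noteq> 0 then - r i * A1 0 j else 0)" if "i < Suc m" for i j
      unfolding B_def using that by (simp add: mm_LmL)
    have A2v: "A2 i j = B i j + (if j \<noteq> 0 then B i 0 * - c j else 0)" if "j < Suc s'" for i j
      unfolding A2_def using that by (simp add: mm_UmR)
    have LR: "Lm (\<lambda>i. - r i) i l \<in> R" if "i < Suc m" "l < Suc m" for i l
      using invL that unfolding invertible_over_def by blast
    have UR: "Um (\<lambda>j. - c j) l j \<in> R" if "j < Suc s'" "l < Suc s'" for j l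
      using invU that unfolding invertible_over_def by blast
    have Bmp: "mp R p (B i j)" if "i < Suc m" "j < Suc s'" for i j
      unfolding B_def by (rule mm_mpL[OF chainR]) (use that LR A1mp in auto)
    have BR: "B i j \<in> R" if "i < Suc m" "j < Suc s'" for i j
      unfolding B_def by (rule mm_R[OF chainR]) (use that LR A1R in auto)
    have A2mp: "mp R p (A2 i j)" if "i < Suc m" "j < Suc s'" for i j
      unfolding A2_def by (rule mm_mpR[OF chainR]) (use that UR Bmp in auto)
    have A2R: "A2 i j \<in> R" if "i < Suc m" "j < Suc s'" for i j
      unfolding A2_def by (rule mm_R[OF chainR]) (use that UR BR in auto)
    have A200: "A2 0 0 = p" using A2v[of 0 0] Bv[of 0 0] A100 by simp
    have A2i0: "A2 i 0 = 0" if "0 < i" "i < Suc m" for i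
      using A2v[of 0 i] Bv[of i 0] that r[OF that(2)] A100 by simp
    have A20j: "A2 0 j = 0" if "0 < j" "j < Suc s'" for j
      using A2v[of j 0] Bv[of 0 j] Bv[of 0 0] that c[OF that(2)] A100 by (simp add: mult.commute)
    define A' where "A' i j = A2 (Suc i) (Suc j)" for i j
    have "\<forall>i<m. \<forall>j<s'. A' i j \<in> R" unfolding A'_def using A2R by auto
    from Suc.IH[OF this] obtain D' where D': "eqv R m s' A' D'"
      "\<forall>i<m. \<forall>j<s'. i \<noteq> j \<longrightarrow> D' i j = 0"
      "\<forall>k. Suc k < min m s' \<longrightarrow> (\<exists>r\<in>R. D' (Suc k) (Suc k) = r * D' k k)" by blast
    have e3: "eqv R (Suc m) s A2 (blk p A')" unfolding s
    proof (rule eqv_agree[OF R0[OF chainR] R1[OF chainR]])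
      fix i j assume "i < Suc m" "j < Suc s'"
      then show "blk p A' i j = A2 i j"
        using A200 A2i0 A20j unfolding blk_def A'_def by (cases i; cases j) auto
    qed
    have e4: "eqv R (Suc m) s (blk p A') (blk p D')" unfolding s by (rule eqv_blk[OF chainR D'(1)])
    have eq: "eqv R (Suc m) s A (blk p D')"
      using eqv_trans[OF chainR eqv_trans[OF chainR eqv_trans[OF chainR e1 e2] e3] e4] .
    have D'mp: "mp R p (D' i j)" if "i < m" "j < s'" for i j
    proof -
      obtain P Q where PQ: "invertible_over R m P" "invertible_over R s' Q"
        "\<forall>i<m. \<forall>j<s'. D' i j = mat_mult (mat_mult P m A') s' Q i j" using D'(1) unfolding eqv_def by blast
      have PR: "\<forall>i<m. \<forall>j<m. P i j \<in> R" "\<forall>i<s'. \<forall>j<s'. Q i j \<in> R"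
        using PQ(1,2) unfolding invertible_over_def by blast+
      have "mp R p (mat_mult P m A' i l)" if "l < s'" for l
        by (rule mm_mpL[OF chainR]) (use that \<open>i < m\<close> PR A2mp in \<open>auto simp: A'_def\<close>)
      then have "mp R p (mat_mult (mat_mult P m A') s' Q i j)"
        by (rule mm_mpR[OF chainR]) (use that PR in auto)
      then show ?thesis using PQ(3) that by simp
    qed
    show ?thesis
    proof (intro exI[of _ "blk p D'"] conjI eq allI impI)
      fix i j assume "i < Suc m" "j < s" "i \<noteq> j"
      then show "blk p D' i j = 0" using D'(2) s unfolding blk_def
        by (cases i; cases j) auto
    next
      fix k assume k: "Suc k < min (Suc m) s"
      show "\<exists>r\<in>R. blk p D' (Suc k) (Suc k) = r * blk p D' k k"
      proof (cases k)
        case 0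
        then have "0 < m" "0 < s'" using k s by auto
        then show ?thesis using D'mp[of 0 0] 0 unfolding blk_def by (simp add: mp_def[OF chainR])
      next
        case (Suc k')
        then have "Suc k' < min m s'" using k s by auto
        then show ?thesis using D'(3) Suc unfolding blk_def by auto
      qed
    qed
  qed
qed

end

lemma funpow_fix: "s q = q \<Longrightarrow> (s ^^ i) q = q"
  by (induction i) auto

lemma skew_eval_add: "ring_aut s \<Longrightarrow> skew_eval s F a (x + y) = skew_eval s F a x + skew_eval s F a y"
  unfolding skew_eval_def Dop_def
  by (simp add: aut_add[OF aut_funpow] distrib_left distrib_right sum.distrib)

lemma skew_eval_zero: "ring_aut s \<Longrightarrow> skew_eval s F a 0 = 0"
  unfolding skew_eval_def Dop_def by (simp add: aut_zero[OF aut_funpow])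

lemma skew_eval_smult: "ring_aut s \<Longrightarrow> s q = q \<Longrightarrow> skew_eval s F a (x * q) = skew_eval s F a x * q"
  unfolding skew_eval_def Dop_def sum_distrib_right
  by (rule sum.cong) (simp_all add: aut_mult[OF aut_funpow] funpow_fix mult_ac)

lemma skew_eval_lin: "ring_aut s \<Longrightarrow> (\<And>j. j \<in> J \<Longrightarrow> s (q j) = q j) \<Longrightarrow>
   skew_eval s F a (\<Sum>j\<in>J. v j * q j) = (\<Sum>j\<in>J. skew_eval s F a (v j) * q j)"
  by (induction J rule: infinite_finite_induct) (auto simp: skew_eval_zero skew_eval_add skew_eval_smult)

context
  fixes R :: "'a::comm_ring_1 set"
  assumes chainR: "chain_ring R"
begin

lemma rk_witness:
  assumes basis: "R_basis R m \<beta>"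
  shows "\<exists>\<alpha> C D. R_basis R m \<alpha> \<and>
       (\<forall>i<m. \<forall>j<s. C i j \<in> R) \<and> (\<forall>j<s. u j = (\<Sum>i<m. C i j * \<alpha> i)) \<and>
       smith_form_of R m s C D \<and> rk R m s u = card {k. k < min m s \<and> D k k \<noteq> 0}"
proof -
  define Pr where "Pr r \<longleftrightarrow> (\<exists>\<alpha> C D. R_basis R m \<alpha> \<and>
       (\<forall>i<m. \<forall>j<s. C i j \<in> R) \<and> (\<forall>j<s. u j = (\<Sum>i<m. C i j * \<alpha> i)) \<and>
       smith_form_of R m s C D \<and> r = card {k. k < min m s \<and> D k k \<noteq> 0})" for r
  define cc where "cc j = (SOME c. (\<forall>i<m. c i \<in> R) \<and> (\<forall>i\<ge>m. c i = 0) \<and> u j = (\<Sum>i<m. c i * \<beta> i))" for j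
  have cc: "(\<forall>i<m. cc j i \<in> R) \<and> (\<forall>i\<ge>m. cc j i = 0) \<and> u j = (\<Sum>i<m. cc j i * \<beta> i)" for j
  proof -
    have "\<exists>c. (\<forall>i<m. c i \<in> R) \<and> (\<forall>i\<ge>m. c i = 0) \<and> u j = (\<Sum>i<m. c i * \<beta> i)"
      using basis unfolding R_basis_def by blast
    then show ?thesis unfolding cc_def by (rule someI_ex)
  qed
  define C where "C i j = cc j i" for i j
  have CR: "\<forall>i<m. \<forall>j<s. C i j \<in> R" using cc unfolding C_def by blast
  have Cu: "\<forall>j<s. u j = (\<Sum>i<m. C i j * \<beta> i)" using cc unfolding C_def by blast
  obtain D where D: "eqv R m s C D" "\<forall>i<m. \<forall>j<s. i \<noteq> j \<longrightarrow> D i j = 0"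
     "\<forall>k. Suc k < min m s \<longrightarrow> (\<exists>r\<in>R. D (Suc k) (Suc k) = r * D k k)"
    using snf[OF chainR CR] by blast
  have "smith_form_of R m s C D" unfolding smith_form_of_def using D unfolding eqv_def by blast
  then have "Pr (card {k. k < min m s \<and> D k k \<noteq> 0})" unfolding Pr_def using basis CR Cu by blast
  then have "Pr (LEAST r. Pr r)" by (rule LeastI)
  moreover have "rk R m s u = (LEAST r. Pr r)" unfolding rk_def Pr_def by simp
  ultimately show ?thesis unfolding Pr_def by simp
qed

end

context
  fixes R :: "'a::comm_ring_1 set" and \<sigma> :: "'a \<Rightarrow> 'a"
  assumes chainR: "chain_ring R"
    and sigma_aut: "ring_aut \<sigma>"
    and sigma_R: "\<And>r. r \<in> R \<Longrightarrow> \<sigma> r = r"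
begin

lemma point:
  assumes basis: "R_basis R m \<beta>"
  shows "\<exists>V. length V = rk R m s u \<and>
    (\<forall>F a. (\<forall>v\<in>set V. skew_eval \<sigma> F a v = 0) \<longrightarrow> (\<forall>j<s. skew_eval \<sigma> F a (u j) = 0))"
proof -
  obtain \<alpha> C D where W: "R_basis R m \<alpha>" "\<forall>i<m. \<forall>j<s. C i j \<in> R"
    "\<forall>j<s. u j = (\<Sum>i<m. C i j * \<alpha> i)" "smith_form_of R m s C D"
    "rk R m s u = card {k. k < min m s \<and> D k k \<noteq> 0}"
    using rk_witness[OF chainR basis] by blast
  obtain P Q where PQ: "invertible_over R m P" "invertible_over R s Q"
    "\<forall>i<m. \<forall>j<s. D i j = mat_mult (mat_mult P m C) s Q i j"
    "\<forall>i<m. \<forall>j<s. i \<noteq> j \<longrightarrow> D i j = 0"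
    using W(4) unfolding smith_form_of_def by blast
  obtain P' where P': "\<forall>i<m. \<forall>j<m. mat_mult P' m P i j = idm i j"
    using PQ(1) unfolding invertible_over_def idm_def by blast
  obtain Q' where Q': "\<forall>i<s. \<forall>j<s. Q i j \<in> R" "\<forall>i<s. \<forall>j<s. Q' i j \<in> R"
    "\<forall>i<s. \<forall>j<s. mat_mult Q s Q' i j = idm i j"
    using PQ(2) unfolding invertible_over_def idm_def by blast
  define u' where "u' j = (\<Sum>l<s. u l * Q l j)" for j
  define K where "K = {k. k < min m s \<and> D k k \<noteq> 0}"
  have u'C: "u' j = (\<Sum>i<m. mat_mult C s Q i j * \<alpha> i)" for j
  proof -
    have "u' j = (\<Sum>l<s. (\<Sum>i<m. C i l * \<alpha> i) * Q l j)" unfolding u'_def using W(3) by simp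
    also have "\<dots> = (\<Sum>l<s. \<Sum>i<m. C i l * Q l j * \<alpha> i)"
      unfolding sum_distrib_right by (intro sum.cong refl) (simp add: mult_ac)
    also have "\<dots> = (\<Sum>i<m. \<Sum>l<s. C i l * Q l j * \<alpha> i)"
      by (rule sum.swap)
    also have "\<dots> = (\<Sum>i<m. mat_mult C s Q i j * \<alpha> i)"
      unfolding mat_mult_def by (simp add: sum_distrib_right)
    finally show ?thesis .
  qed
  have CQ: "mat_mult C s Q i j = (\<Sum>k<m. P' i k * D k j)" if "i < m" "j < s" for i j
  proof -
    have "(\<Sum>k<m. P' i k * D k j) = mat_mult P' m (mat_mult (mat_mult P m C) s Q) i j"
      unfolding mat_mult_def[of P' m] using PQ(3) that by (intro sum.cong) auto
    also have "\<dots> = mat_mult (mat_mult P' m P) m (mat_mult C s Q) i j" by (simp add: mm_assoc)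
    also have "\<dots> = mat_mult C s Q i j" by (rule mm_idl') (use P' that in auto)
    finally show ?thesis by simp
  qed
  have u'0: "u' j = 0" if "j < s" "j \<notin> K" for j
  proof -
    have "D k j = 0" if "k < m" for k
      using PQ(4) that \<open>j < s\<close> \<open>j \<notin> K\<close> unfolding K_def by (cases "k = j") auto
    then show ?thesis unfolding u'C using CQ that(1) by simp
  qed
  have uu': "u k = (\<Sum>j<s. u' j * Q' j k)" if "k < s" for k
  proof -
    have "(\<Sum>j<s. u' j * Q' j k) = (\<Sum>l<s. u l * mat_mult Q s Q' l k)"
    proof -
      have "(\<Sum>j<s. u' j * Q' j k) = (\<Sum>j<s. \<Sum>l<s. u l * (Q l j * Q' j k))"
        unfolding u'_def sum_distrib_right by (intro sum.cong refl) (simp add: mult_ac)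
      also have "\<dots> = (\<Sum>l<s. \<Sum>j<s. u l * (Q l j * Q' j k))" by (rule sum.swap)
      also have "\<dots> = (\<Sum>l<s. u l * mat_mult Q s Q' l k)"
        unfolding mat_mult_def sum_distrib_left ..
      finally show ?thesis .
    qed
    also have "\<dots> = (\<Sum>l<s. u l * idm l k)" using Q'(3) that by (intro sum.cong) auto
    also have "\<dots> = u k" using mm_idr[OF that, of "\<lambda>_ l. u l" 0] unfolding mat_mult_def by simp
    finally show ?thesis by simp
  qed
  define V where "V = map u' (sorted_list_of_set K)"
  have fK: "finite K" unfolding K_def by simp
  have lenV: "length V = rk R m s u" unfolding V_def W(5) K_def by simp
  have "\<forall>j<s. skew_eval \<sigma> F a (u j) = 0" if H: "\<forall>v\<in>set V. skew_eval \<sigma> F a v = 0" for F a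
  proof (intro allI impI)
    fix k assume k: "k < s"
    have z: "skew_eval \<sigma> F a (u' j) = 0" if "j < s" for j
    proof (cases "j \<in> K")
      case True
      then have "u' j \<in> set V" unfolding V_def using fK by simp
      then show ?thesis using H by blast
    next
      case False
      then show ?thesis using u'0[OF that] skew_eval_zero[OF sigma_aut] by simp
    qed
    have "skew_eval \<sigma> F a (u k) = (\<Sum>j<s. skew_eval \<sigma> F a (u' j) * Q' j k)"
      unfolding uu'[OF k] by (rule skew_eval_lin[OF sigma_aut]) (use Q'(2) k sigma_R in auto)
    also have "\<dots> = 0" using z by simp
    finally show "skew_eval \<sigma> F a (u k) = 0" .
  qed
  then show ?thesis using lenV by blast
qed

end

theorem corollary3:
  fixes R :: "'a::comm_ring_1 set"
    and h :: "'a poly" and \<theta> :: 'a and m :: nat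
    and \<sigma> :: "'a \<Rightarrow> 'a"
    and l :: nat and a :: "nat \<Rightarrow> 'a" and n :: "nat \<Rightarrow> nat" and u :: "nat \<Rightarrow> nat \<Rightarrow> 'a"
  assumes finS: "finite (UNIV :: 'a set)"
    and nontriv: "(0::'a) \<noteq> 1"
    and chainR: "chain_ring R"
    and h_coeffs: "\<forall>i. coeff h i \<in> R"
    and h_monic: "lead_coeff h = 1"
    and h_deg: "degree h = m"
    and h_irred: "irred_mod_max R h"
    and theta_root: "poly h \<theta> = 0"
    and theta_basis: "R_basis R m (\<lambda>i. \<theta> ^ i)"
    and sigma_aut: "ring_aut \<sigma>"
    and sigma_fixed: "{y. \<sigma> y = y} = R"
    and sigma_gen: "\<forall>\<tau>. ring_aut \<tau> \<and> (\<forall>r\<in>R. \<tau> r = r) \<longrightarrow> (\<exists>k. \<tau> = \<sigma> ^^ k)"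
    and sigma_frob: "\<forall>y. \<sigma> y - y ^ residue_card R \<in> ext_ideal R"
    and distinct: "\<forall>i j. i < j \<and> j < l \<longrightarrow>
        (\<forall>\<beta> \<gamma>. \<beta> * \<gamma> = 1 \<longrightarrow> (a i - \<sigma> \<beta> * a j * \<gamma>) dvd 1)"
  shows "\<exists>F :: 'a poly. lead_coeff F = 1 \<and>
            degree F = (\<Sum>i<l. rk R m (n i) (u i)) \<and>
            (\<forall>i<l. \<forall>j<n i. skew_eval \<sigma> F (a i) (u i j) = 0)"
proof -
  have H: "\<And>y. \<exists>t. \<sigma> y = t * y"
    by (rule sigma_mult_form[OF finS nontriv chainR sigma_aut sigma_fixed sigma_frob])
  have sR: "\<And>r. r \<in> R \<Longrightarrow> \<sigma> r = r" using sigma_fixed by auto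
  have "\<forall>i. \<exists>V. length V = rk R m (n i) (u i) \<and>
    (\<forall>F a. (\<forall>v\<in>set V. skew_eval \<sigma> F a v = 0) \<longrightarrow> (\<forall>j<n i. skew_eval \<sigma> F a (u i j) = 0))"
    using point[OF chainR sigma_aut sR theta_basis] by blast
  then obtain V where V: "\<And>i. length (V i) = rk R m (n i) (u i)"
    "\<And>i F a. (\<forall>v\<in>set (V i). skew_eval \<sigma> F a v = 0) \<Longrightarrow> (\<forall>j<n i. skew_eval \<sigma> F a (u i j) = 0)"
    by metis
  define xs where "xs = concat (map (\<lambda>i. map (\<lambda>v. (a i, v)) (V i)) [0..<l])"
  obtain F where F: "lead_coeff F = 1" "degree F = length xs"
    "\<forall>(a, v)\<in>set xs. skew_eval \<sigma> F a v = 0"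
    using build[OF sigma_aut nontriv H] by blast
  have "length xs = (\<Sum>i<l. rk R m (n i) (u i))"
  proof -
    have "length xs = sum_list (map (\<lambda>i. length (V i)) [0..<l])"
      unfolding xs_def length_concat map_map by (simp add: comp_def)
    also have "\<dots> = (\<Sum>i\<in>set [0..<l]. length (V i))" by (rule sum_set_upt_conv_sum_list_nat[symmetric])
    also have "\<dots> = (\<Sum>i<l. rk R m (n i) (u i))" by (simp add: V(1) atLeast0LessThan)
    finally show ?thesis .
  qed
  moreover have "\<forall>i<l. \<forall>j<n i. skew_eval \<sigma> F (a i) (u i j) = 0"
  proof (intro allI impI)
    fix i j assume i: "i < l" and j: "j < n i"
    have "\<forall>v\<in>set (V i). skew_eval \<sigma> F (a i) v = 0"
    proof
      fix v assume "v \<in> set (V i)"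
      then have "(a i, v) \<in> set xs" unfolding xs_def using i by auto
      then show "skew_eval \<sigma> F (a i) v = 0" using F(3) by auto
    qed
    then show "skew_eval \<sigma> F (a i) (u i j) = 0" using V(2) j by blast
  qed
  ultimately show ?thesis using F(1,2) by (intro exI[of _ F]) simp
qed

end
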